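(* Let $\beta\in\mathbb{C}$ with $|\beta|=1$ and $\beta^n\neq1$ for all $n\in\mathbb{N}$, and let $m\in\mathrm{Hol}(\mathbb{D})$ with $m(z)\neq0$ for all $z\in\mathbb{D}$. Let $T:\mathrm{Hol}(\mathbb{D})\to\mathrm{Hol}(\mathbb{D})$ be given by $(Tf)(z)=m(z)f(\beta z)$. Then (a) $\{\beta^n m(0):n\in\mathbb{N}_0\}\subset\sigma(T)\subset\{\lambda\in\mathbb{C}:|\lambda|=|m(0)|\}$; (b) $\sigma_W(T)=\{\lambda\in\mathbb{C}:|\lambda|=|m(0)|\}$.
   Context: $\mathbb{D}$ is the open unit disc, $\mathbb{N}_0=\mathbb{N}\cup\{0\}$, and $\mathrm{Hol}(\mathbb{D})$ is the Fréchet space of holomorphic functions on $\mathbb{D}$ with the topology of uniform convergence on compact subsets, given by the seminorms $\|f\|_{A(r\mathbb{D})}=\sup_{|z|\leq r}|f(z)|$, $0<r<1$. For a continuous linear operator $T$ on $\mathrm{Hol}(\mathbb{D})$, $\rho(T)$ is the set of $\lambda\in\mathbb{C}$ with $\lambda\mathrm{Id}-T$ bijective, $\sigma(T)=\mathbb{C}\setminus\rho(T)$, and $R_\lambda=(\lambda\mathrm{Id}-T)^{-1}$. The Waelbroeck resolvent set $\rho_W(T)$ is the set of $\lambda\in\rho(T)$ for which there is $\delta>0$ with $\overline{D}(\lambda,\delta)\subset\rho(T)$ and $\sup_{|\mu-\lambda|\leq\delta}\|R_\mu f\|_{A(r\mathbb{D})}<\infty$ for all $f\in\mathrm{Hol}(\mathbb{D})$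 and all $0<r<1$; $\sigma_W(T)=\mathbb{C}\setminus\rho_W(T)$. *)

theory Defs
  imports "HOL-Analysis.Analysis"
begin

text \<open>Hol(D) is modelled as the set of functions complex => complex that are holomorphic
on the open unit disc; two such functions are identified when they agree on the disc.
An operator on Hol(D) is a map T on functions (assumed to preserve HolD).\<close>

definition HolD :: "(complex \<Rightarrow> complex) set" where
  "HolD = {f. f holomorphic_on ball 0 1}"

definition solves :: "((complex \<Rightarrow> complex) \<Rightarrow> (complex \<Rightarrow> complex)) \<Rightarrow> complex
    \<Rightarrow> (complex \<Rightarrow> complex) \<Rightarrow> (complex \<Rightarrow> complex) \<Rightarrow> bool" where
  "solves T \<mu> g f \<longleftrightarrow> (\<forall>z\<in>ball 0 1. \<mu> * f z - T f z = g z)"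

definition hol_resolvent_set :: "((complex \<Rightarrow> complex) \<Rightarrow> (complex \<Rightarrow> complex)) \<Rightarrow> complex set" where
  "hol_resolvent_set T = {l.
     (\<forall>g\<in>HolD. \<exists>f\<in>HolD. solves T l g f) \<and>
     (\<forall>f1\<in>HolD. \<forall>f2\<in>HolD.
        (\<forall>z\<in>ball 0 1. l * f1 z - T f1 z = l * f2 z - T f2 z) \<longrightarrow>
        (\<forall>z\<in>ball 0 1. f1 z = f2 z))}"

definition hol_spectrum :: "((complex \<Rightarrow> complex) \<Rightarrow> (complex \<Rightarrow> complex)) \<Rightarrow> complex set" where
  "hol_spectrum T = - hol_resolvent_set T"

text \<open>R_mu g is the unique f in HolD with solves T mu g f,
so the boundedness of sup over mu of the seminorm of R_mu g is expressed by a uniform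
bound C on all such solutions on the closed disc of radius r.\<close>
definition waelbroeck_resolvent_set :: "((complex \<Rightarrow> complex) \<Rightarrow> (complex \<Rightarrow> complex)) \<Rightarrow> complex set" where
  "waelbroeck_resolvent_set T = {l. l \<in> hol_resolvent_set T \<and>
     (\<exists>\<delta>>0. cball l \<delta> \<subseteq> hol_resolvent_set T \<and>
        (\<forall>g\<in>HolD. \<forall>r. 0 < r \<and> r < 1 \<longrightarrow>
           (\<exists>C. \<forall>\<mu>\<in>cball l \<delta>. \<forall>f\<in>HolD. solves T \<mu> g f \<longrightarrow>
                 (\<forall>z. norm z \<le> r \<longrightarrow> norm (f z) \<le> C))))}"

definition waelbroeck_spectrum :: "((complex \<Rightarrow> complex) \<Rightarrow> (complex \<Rightarrow> complex)) \<Rightarrow> complex set" where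
  "waelbroeck_spectrum T = - waelbroeck_resolvent_set T"

end

theory Submission
  imports Defs "HOL-Complex_Analysis.Complex_Analysis"
begin

lemma cont_bound_cball:
  assumes "continuous_on (cball 0 r) (f::complex \<Rightarrow> complex)"
  obtains U where "U \<ge> 0" "\<And>w. norm w \<le> r \<Longrightarrow> norm (f w) \<le> U"
proof -
  obtain U where "U \<ge> 0" "\<And>x. x \<in> cball 0 r \<Longrightarrow> norm (f x) \<le> U"
    using continuous_on_compact_bound[OF compact_cball assms] by blast
  then show ?thesis using that by auto
qed

lemma taylor_approx:
  fixes h :: "complex \<Rightarrow> complex"
  assumes hol: "h holomorphic_on ball 0 1" and r: "0 < r" "r < 1" and e: "e > 0"
  obtains N a where "N \<ge> 1" "a 0 = h 0"
    "\<And>w. norm w \<le> r \<Longrightarrow> norm (h w - (\<Sum>n<N. a n * w^n)) \<le> e"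
proof -
  define a where "a n = (deriv ^^ n) h 0 / fact n" for n
  define s where "s = (1 + r) / 2"
  have s: "r < s" "s < 1" using r by (auto simp: s_def)
  have sums: "(\<lambda>n. a n * w^n) sums h w" if "w \<in> ball 0 1" for w
    using holomorphic_power_series[OF hol that] by (simp add: a_def)
  have "summable (\<lambda>n. a n * (of_real s)^n)"
    using sums[of "of_real s"] s r by (auto simp: sums_iff)
  then have "Bseq (\<lambda>n. a n * (of_real s)^n)" by (rule summable_imp_Bseq)
  then obtain K where K: "K > 0" "\<And>n. norm (a n * (of_real s)^n) \<le> K"
    by (auto elim!: BseqE)
  define q where "q = r / s"
  have q: "0 < q" "q < 1" using s r by (auto simp: q_def)
  have bnd: "norm (a n * w^n) \<le> K * q^n" if "w \<in> cball 0 r" for n w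
  proof -
    have "norm (a n * w^n) = norm (a n) * norm w ^ n" by (simp add: norm_mult norm_power)
    also have "\<dots> \<le> norm (a n) * r ^ n"
      using that by (auto intro!: mult_left_mono power_mono)
    also have "\<dots> = (norm (a n) * s^n) * q^n"
      using s r by (simp add: q_def power_divide)
    also have "\<dots> \<le> K * q^n"
      using K(2)[of n] s r q by (auto intro!: mult_right_mono simp: norm_mult norm_power)
    finally show ?thesis .
  qed
  have summ: "summable (\<lambda>n. K * q^n)" using q by (auto intro!: summable_mult summable_geometric)
  have ul: "uniform_limit (cball 0 r) (\<lambda>n x. \<Sum>i<n. a i * x^i) (\<lambda>x. suminf (\<lambda>i. a i * x^i)) sequentially"
    apply (rule Weierstrass_m_test[where M="\<lambda>n. K*q^n" and f="\<lambda>i x. a i * x^i"])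
    using bnd summ by auto
  then have "\<forall>\<^sub>F n in sequentially. \<forall>x\<in>cball 0 r. dist (\<Sum>i<n. a i * x^i) (suminf (\<lambda>i. a i * x^i)) < e"
    using e by (rule uniform_limitD)
  then obtain N0 where N0: "\<And>n x. n \<ge> N0 \<Longrightarrow> x \<in> cball 0 r \<Longrightarrow> dist (\<Sum>i<n. a i * x^i) (suminf (\<lambda>i. a i * x^i)) < e"
    unfolding eventually_sequentially by (metis mem_cball_0)
  define N where "N = max N0 1"
  show ?thesis
  proof (rule that[of N a])
    show "1 \<le> N" by (simp add: N_def)
    show "a 0 = h 0" by (simp add: a_def)
    fix w :: complex assume w: "norm w \<le> r"
    then have "w \<in> ball 0 1" using r by auto
    then have "suminf (\<lambda>i. a i * w^i) = h w" using sums by (simp add: sums_iff)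
    moreover have "dist (\<Sum>i<N. a i * w^i) (suminf (\<lambda>i. a i * w^i)) < e"
      using N0[of N w] w by (auto simp: N_def)
    ultimately show "norm (h w - (\<Sum>n<N. a n * w^n)) \<le> e"
      by (simp add: dist_norm norm_minus_commute)
  qed
qed

lemma geom_bound:
  fixes x :: complex
  assumes "norm x = 1" "x \<noteq> 1"
  shows "norm (\<Sum>j<k. x^j) \<le> 2 / norm (1 - x)"
proof -
  have "(\<Sum>j<k. x^j) = (1 - x^k) / (1 - x)" using assms by (simp add: sum_gp_strict)
  moreover have "norm (1 - x^k) \<le> 2"
  proof -
    have "norm (1 - x^k) \<le> norm (1::complex) + norm (x^k)" by (rule norm_triangle_ineq4)
    also have "\<dots> = 2" using assms by (simp add: norm_power)
    finally show ?thesis .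
  qed
  moreover have "norm (1 - x) > 0" using assms by simp
  ultimately show ?thesis by (simp add: norm_divide divide_right_mono)
qed

lemma ergodic:
  fixes h :: "complex \<Rightarrow> complex" and \<gamma> :: complex
  assumes g1: "norm \<gamma> = 1" and girr: "\<forall>n::nat. n \<ge> 1 \<longrightarrow> \<gamma> ^ n \<noteq> 1"
    and hol: "h holomorphic_on ball 0 1" and e: "e > 0" and r: "0 < r" "r < 1"
  obtains B where "\<And>k z. norm z \<le> r \<Longrightarrow>
     norm ((\<Sum>j<k. h (\<gamma>^j * z)) - of_nat k * h 0) \<le> real k * e + B"
proof -
  obtain N a where N: "N \<ge> 1" "a 0 = h 0"
    and app: "\<And>w. norm w \<le> r \<Longrightarrow> norm (h w - (\<Sum>n<N. a n * w^n)) \<le> e"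
    using taylor_approx[OF hol r e] by blast
  obtain N' where N': "N = Suc N'" using N by (cases N) auto
  define p where "p w = (\<Sum>n<N. a n * w^n)" for w
  define B where "B = (\<Sum>n<N'. norm (a (Suc n)) * (2 / norm (1 - \<gamma>^Suc n)))"
  show ?thesis
  proof (rule that[of B])
    fix k :: nat and z :: complex
    assume z: "norm z \<le> r"
    have nz: "norm (\<gamma>^j * z) = norm z" for j using g1 by (simp add: norm_mult norm_power)
    have part1: "norm (\<Sum>j<k. h (\<gamma>^j * z) - p (\<gamma>^j * z)) \<le> real k * e"
    proof -
      have "norm (\<Sum>j<k. h (\<gamma>^j * z) - p (\<gamma>^j * z)) \<le> (\<Sum>j<k. norm (h (\<gamma>^j * z) - p (\<gamma>^j * z)))"
        by (rule norm_sum)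
      also have "\<dots> \<le> (\<Sum>j<k. e)"
        using app z nz by (intro sum_mono) (simp add: p_def)
      finally show ?thesis by simp
    qed
    have swap: "(\<Sum>j<k. p (\<gamma>^j * z)) = (\<Sum>n<N. a n * z^n * (\<Sum>j<k. (\<gamma>^n)^j))"
    proof -
      have "(\<Sum>j<k. p (\<gamma>^j * z)) = (\<Sum>j<k. \<Sum>n<N. a n * z^n * (\<gamma>^n)^j)"
        unfolding p_def
        by (intro sum.cong refl) (simp add: power_mult_distrib power_mult[symmetric] mult.commute mult.left_commute)
      also have "\<dots> = (\<Sum>n<N. \<Sum>j<k. a n * z^n * (\<gamma>^n)^j)" by (rule sum.swap)
      also have "\<dots> = (\<Sum>n<N. a n * z^n * (\<Sum>j<k. (\<gamma>^n)^j))" by (simp add: sum_distrib_left)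
      finally show ?thesis .
    qed
    have split: "(\<Sum>n<N. a n * z^n * (\<Sum>j<k. (\<gamma>^n)^j)) = of_nat k * h 0
        + (\<Sum>n<N'. a (Suc n) * z^(Suc n) * (\<Sum>j<k. (\<gamma>^(Suc n))^j))"
      unfolding N' sum.lessThan_Suc_shift using N by simp
    have part2: "norm (\<Sum>n<N'. a (Suc n) * z^(Suc n) * (\<Sum>j<k. (\<gamma>^(Suc n))^j)) \<le> B"
    proof -
      have "norm (\<Sum>n<N'. a (Suc n) * z^(Suc n) * (\<Sum>j<k. (\<gamma>^(Suc n))^j))
          \<le> (\<Sum>n<N'. norm (a (Suc n) * z^(Suc n) * (\<Sum>j<k. (\<gamma>^(Suc n))^j)))"
        by (rule norm_sum)
      also have "\<dots> \<le> B"
        unfolding B_def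
      proof (intro sum_mono)
        fix n assume "n \<in> {..<N'}"
        have ng: "norm (\<gamma>^Suc n) = 1" using g1 by (metis norm_power power_one)
        have ng1: "\<gamma>^Suc n \<noteq> 1" using girr by auto
        have zz: "norm z ^ Suc n \<le> 1" using z r by (intro power_le_one) auto
        have "norm (a (Suc n) * z^(Suc n) * (\<Sum>j<k. (\<gamma>^(Suc n))^j))
            = norm (a (Suc n)) * norm z ^ Suc n * norm (\<Sum>j<k. (\<gamma>^(Suc n))^j)"
          by (simp add: norm_mult norm_power)
        also have "\<dots> \<le> norm (a (Suc n)) * 1 * (2 / norm (1 - \<gamma>^Suc n))"
          using geom_bound[OF ng ng1, of k] zz
          by (intro mult_mono mult_left_mono) auto
        finally show "norm (a (Suc n) * z^(Suc n) * (\<Sum>j<k. (\<gamma>^(Suc n))^j))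
            \<le> norm (a (Suc n)) * (2 / norm (1 - \<gamma>^Suc n))" by simp
      qed
      finally show ?thesis .
    qed
    have "(\<Sum>j<k. h (\<gamma>^j * z)) - of_nat k * h 0 = (\<Sum>j<k. h (\<gamma>^j * z) - p (\<gamma>^j * z))
        + (\<Sum>n<N'. a (Suc n) * z^(Suc n) * (\<Sum>j<k. (\<gamma>^(Suc n))^j))"
      using swap split by (simp add: sum_subtractf)
    also have "norm \<dots> \<le> real k * e + B"
      using part1 part2 by (intro order.trans[OF norm_triangle_ineq] add_mono)
    finally show "norm ((\<Sum>j<k. h (\<gamma>^j * z)) - of_nat k * h 0) \<le> real k * e + B" .
  qed
qed

lemma prod_bound:
  fixes m :: "complex \<Rightarrow> complex" and \<gamma> :: complex
  assumes g1: "norm \<gamma> = 1" and girr: "\<forall>n::nat. n \<ge> 1 \<longrightarrow> \<gamma> ^ n \<noteq> 1"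
    and hol: "m holomorphic_on ball 0 1" and nz: "\<forall>z\<in>ball 0 1. m z \<noteq> 0"
    and q: "q > 1" and r: "0 < r" "r < 1"
  obtains C where "C \<ge> 0" "\<And>k z. norm z \<le> r \<Longrightarrow>
     norm (\<Prod>j<k. m (\<gamma>^j * z)) \<le> C * (q * norm (m 0))^k"
proof -
  obtain h where h: "h holomorphic_on ball 0 1" "\<And>x. x \<in> ball 0 1 \<Longrightarrow> exp (h x) = m x"
    using holomorphic_logarithm_exists[of "ball 0 1" m 0] hol nz by auto
  have e: "ln q > 0" using q by simp
  obtain B where B: "\<And>k z. norm z \<le> r \<Longrightarrow>
     norm ((\<Sum>j<k. h (\<gamma>^j * z)) - of_nat k * h 0) \<le> real k * ln q + B"
    using ergodic[OF g1 girr h(1) e r] by blast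
  have m0: "norm (m 0) = exp (Re (h 0))" using h(2)[of 0] by (metis centre_in_ball norm_exp_eq_Re zero_less_one)
  show ?thesis
  proof (rule that[of "exp B"])
    show "exp B \<ge> 0" by simp
    fix k :: nat and z :: complex assume z: "norm z \<le> r"
    have nzj: "norm (\<gamma>^j * z) = norm z" for j using g1 by (simp add: norm_mult norm_power)
    have "(\<Prod>j<k. m (\<gamma>^j * z)) = (\<Prod>j<k. exp (h (\<gamma>^j * z)))"
      using h(2) nzj z r by (intro prod.cong refl) auto
    also have "\<dots> = exp (\<Sum>j<k. h (\<gamma>^j * z))" by (simp add: exp_sum)
    finally have eq: "norm (\<Prod>j<k. m (\<gamma>^j * z)) = exp (Re (\<Sum>j<k. h (\<gamma>^j * z)))"
      by (simp add: norm_exp_eq_Re)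
    have "Re (\<Sum>j<k. h (\<gamma>^j * z)) - real k * Re (h 0)
        = Re ((\<Sum>j<k. h (\<gamma>^j * z)) - of_nat k * h 0)" by simp
    also have "\<dots> \<le> norm ((\<Sum>j<k. h (\<gamma>^j * z)) - of_nat k * h 0)" by (rule complex_Re_le_cmod)
    also have "\<dots> \<le> real k * ln q + B" using B z by blast
    finally have "Re (\<Sum>j<k. h (\<gamma>^j * z)) \<le> B + real k * (ln q + Re (h 0))"
      by (simp add: algebra_simps)
    then have "exp (Re (\<Sum>j<k. h (\<gamma>^j * z))) \<le> exp (B + real k * (ln q + Re (h 0)))"
      by simp
    also have "\<dots> = exp B * (q * norm (m 0))^k"
    proof -
      have "exp (real k * (ln q + Re (h 0))) = exp (ln q + Re (h 0))^k" by (rule exp_of_nat_mult)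
      then show ?thesis using q by (simp add: exp_add m0)
    qed
    finally show "norm (\<Prod>j<k. m (\<gamma>^j * z)) \<le> exp B * (q * norm (m 0))^k" using eq by simp
  qed
qed

lemma hol_rot:
  assumes "m holomorphic_on ball 0 1" "norm (c::complex) = 1"
  shows "(\<lambda>z. m (c * z)) holomorphic_on ball 0 1"
proof -
  have "(m \<circ> (\<lambda>z. c * z)) holomorphic_on ball 0 1"
    by (rule holomorphic_on_compose_gen[where t="ball 0 1"])
       (use assms in \<open>auto intro!: holomorphic_intros simp: norm_mult\<close>)
  then show ?thesis by (simp add: o_def)
qed

lemma hol_bound:
  fixes f :: "complex \<Rightarrow> complex"
  assumes "f holomorphic_on ball 0 1" "r < 1"
  obtains U where "U \<ge> 0" "\<And>w. norm w \<le> r \<Longrightarrow> norm (f w) \<le> U"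
proof -
  have "cball 0 r \<subseteq> ball (0::complex) 1" using assms(2) by (auto simp: subset_eq)
  then have "f holomorphic_on cball 0 r" using assms(1) by (rule holomorphic_on_subset[rotated])
  then have "continuous_on (cball 0 r) f" by (rule holomorphic_on_imp_continuous_on)
  then show ?thesis using that cont_bound_cball by blast
qed

lemma P_Suc:
  "(\<Prod>j<Suc k. m ((\<beta>::complex)^j * z)) = m z * (\<Prod>j<k. m (\<beta>^j * (\<beta> * z)))"
  by (subst prod.lessThan_Suc_shift) (simp add: mult_ac)

lemma core_iter:
  fixes \<beta> z :: complex and u m :: "complex \<Rightarrow> complex"
  assumes b1: "norm \<beta> = 1"
    and eq: "\<forall>z\<in>ball 0 1. l * u z - m z * u (\<beta> * z) = (0::complex)"
  shows "z \<in> ball 0 1 \<Longrightarrow> l^k * u z = (\<Prod>j<k. m (\<beta>^j * z)) * u (\<beta>^k * z)"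
proof (induction k arbitrary: z)
  case 0 then show ?case by simp
next
  case (Suc k)
  have bz: "\<beta> * z \<in> ball 0 1" using Suc.prems b1 by (simp add: norm_mult)
  have "l^Suc k * u z = l^k * (l * u z)" by simp
  also have "\<dots> = l^k * (m z * u (\<beta> * z))" using eq Suc.prems by (metis eq_iff_diff_eq_0)
  also have "\<dots> = m z * (l^k * u (\<beta> * z))" by (simp add: mult_ac)
  also have "\<dots> = m z * ((\<Prod>j<k. m (\<beta>^j * (\<beta> * z))) * u (\<beta>^k * (\<beta> * z)))"
    using Suc.IH[OF bz] by simp
  also have "\<dots> = (m z * (\<Prod>j<k. m (\<beta>^j * (\<beta> * z)))) * u (\<beta>^Suc k * z)"
    by (simp only: power_Suc2 mult.assoc)
  also have "\<dots> = (\<Prod>j<Suc k. m (\<beta>^j * z)) * u (\<beta>^Suc k * z)"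
    by (simp only: P_Suc)
  finally show ?case .
qed

lemma core_unique:
  fixes m u :: "complex \<Rightarrow> complex"
  assumes b1: "norm \<beta> = 1" and th: "0 \<le> \<theta>" "\<theta> < \<rho>" "\<rho> \<le> norm l"
    and PB: "\<And>r. 0 < r \<Longrightarrow> r < 1 \<Longrightarrow> \<exists>C. \<forall>k z. norm z \<le> r \<longrightarrow> norm (\<Prod>j<k. m (\<beta>^j * z)) \<le> C * \<theta>^k"
    and holu: "u holomorphic_on ball 0 1"
    and eq: "\<forall>z\<in>ball 0 1. l * u z - m z * u (\<beta> * z) = 0"
    and z: "z \<in> ball 0 1"
  shows "u z = 0"
proof -
  define r where "r = (norm z + 1) / 2"
  have z1: "norm z < 1" using z by simp
  have "norm z \<ge> 0" by simp
  have r1: "0 < r" using z1 unfolding r_def by (simp add: add_nonneg_pos)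
  have r2: "r < 1" using z1 unfolding r_def by (simp add: field_simps)
  have r3: "norm z \<le> r" using z1 unfolding r_def by (simp add: field_simps)
  note r = r1 r2 r3
  obtain C where C: "\<And>k w. norm w \<le> r \<Longrightarrow> norm (\<Prod>j<k. m (\<beta>^j * w)) \<le> C * \<theta>^k"
    using PB[OF r(1,2)] by blast
  obtain U where U: "U \<ge> 0" "\<And>w. norm w \<le> r \<Longrightarrow> norm (u w) \<le> U"
    using hol_bound[OF holu r(2)] by blast
  have C0: "C \<ge> 0" using C[of 0 0] r by simp
  have rho: "\<rho> > 0" using th by simp
  have bnd: "norm (u z) \<le> C * U * (\<theta>/\<rho>)^k" for k
  proof -
    have nk: "norm (\<beta>^k * z) = norm z" using b1 by (simp add: norm_mult norm_power)
    have "norm (u z) * \<rho>^k \<le> norm (u z) * norm l^k"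
      using th by (intro mult_left_mono power_mono) auto
    also have "\<dots> = norm (l^k * u z)" by (simp add: norm_mult norm_power)
    also have "\<dots> = norm ((\<Prod>j<k. m (\<beta>^j * z)) * u (\<beta>^k * z))"
      using core_iter[OF b1 eq z] by simp
    also have "\<dots> \<le> (C * \<theta>^k) * U"
      unfolding norm_mult using C[OF r(3)] U nk r(3) C0 th
      by (intro mult_mono) auto
    finally have "norm (u z) * \<rho>^k \<le> C * U * \<theta>^k" by (simp add: mult_ac)
    then show ?thesis using rho by (simp add: power_divide field_simps)
  qed
  have "(\<lambda>k. C * U * (\<theta>/\<rho>)^k) \<longlonglongrightarrow> C * U * 0"
    using th by (intro tendsto_mult tendsto_const LIMSEQ_power_zero) auto
  then have "norm (u z) \<le> 0"
    using bnd by (intro LIMSEQ_le_const[where a="norm (u z)"]) auto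
  then show ?thesis by simp
qed

lemma core_exist:
  fixes m g :: "complex \<Rightarrow> complex" and \<beta> l :: complex
  assumes b1: "norm \<beta> = 1" and holm: "m holomorphic_on ball 0 1" and holg: "g holomorphic_on ball 0 1"
    and th: "0 \<le> \<theta>" "\<theta> < \<rho>" "\<rho> \<le> norm l"
    and PB: "\<And>r. 0 < r \<Longrightarrow> r < 1 \<Longrightarrow> \<exists>C. \<forall>k z. norm z \<le> r \<longrightarrow> norm (\<Prod>j<k. m (\<beta>^j * z)) \<le> C * \<theta>^k"
  obtains f where "f holomorphic_on ball 0 1" "\<forall>z\<in>ball 0 1. l * f z - m z * f (\<beta> * z) = g z"
    "\<And>r C G z. 0 < r \<Longrightarrow> r < 1 \<Longrightarrow> (\<forall>k w. norm w \<le> r \<longrightarrow> norm (\<Prod>j<k. m (\<beta>^j * w)) \<le> C * \<theta>^k)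
       \<Longrightarrow> (\<forall>w. norm w \<le> r \<longrightarrow> norm (g w) \<le> G) \<Longrightarrow> norm z \<le> r \<Longrightarrow> norm (f z) \<le> C * G / (\<rho> - \<theta>)"
proof -
  have rho: "\<rho> > 0" using th by simp
  have l0: "l \<noteq> 0" using th by auto
  have q: "0 \<le> \<theta>/\<rho>" "\<theta>/\<rho> < 1" using th rho by auto
  define P where "P k z = (\<Prod>j<k. m (\<beta>^j * z))" for k z
  define t where "t k z = P k z * g (\<beta>^k * z) / l^(k+1)" for k z
  define M where "M C G k = (C * G / \<rho>) * (\<theta>/\<rho>)^k" for C G :: real and k :: nat
  have nbz: "norm (\<beta>^k * z) = norm z" for k z using b1 by (simp add: norm_mult norm_power)
  have tb: "norm (t k z) \<le> M C G k"
    if r: "0 < r" "r < 1" and C: "\<forall>k w. norm w \<le> r \<longrightarrow> norm (P k w) \<le> C * \<theta>^k"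
      and G: "\<forall>w. norm w \<le> r \<longrightarrow> norm (g w) \<le> G" and z: "norm z \<le> r" for r C G k z
  proof -
    have C0: "C \<ge> 0" using C[rule_format, of 0 0] r by (simp add: P_def)
    have G0: "G \<ge> 0" using G[rule_format, of 0] r by (smt (verit) norm_ge_zero norm_zero)
    have "norm (t k z) = norm (P k z) * norm (g (\<beta>^k * z)) / norm l ^ (k+1)"
      by (simp add: t_def norm_mult norm_divide norm_power)
    also have "\<dots> \<le> (C * \<theta>^k) * G / \<rho> ^ (k+1)"
    proof (intro frac_le mult_mono)
      show "norm (P k z) \<le> C * \<theta>^k" using C z by blast
      show "norm (g (\<beta>^k * z)) \<le> G" using G z nbz by metis
      show "\<rho> ^ (k+1) \<le> norm l ^ (k+1)" using th by (intro power_mono) auto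
    qed (use C0 G0 th rho in auto)
    also have "\<dots> = M C G k" by (simp add: M_def power_divide field_simps)
    finally show ?thesis .
  qed
  have Msum: "summable (M C G)" for C G
    unfolding M_def using q by (intro summable_mult summable_geometric) auto
  have Mval: "suminf (M C G) = C * G / (\<rho> - \<theta>)" for C G
  proof -
    have "suminf (M C G) = (C * G / \<rho>) * (1 / (1 - \<theta>/\<rho>))"
      unfolding M_def using q by (subst suminf_mult) (auto simp: suminf_geometric)
    also have "\<dots> = C * G / (\<rho> - \<theta>)" using rho th by (simp add: field_simps)
    finally show ?thesis .
  qed
  have loc: "\<exists>C G. (\<forall>k w. norm w \<le> r \<longrightarrow> norm (P k w) \<le> C * \<theta>^k) \<and> (\<forall>w. norm w \<le> r \<longrightarrow> norm (g w) \<le> G)"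
    if r01: "0 < r" "r < 1" for r
  proof -
    obtain C where "\<forall>k w. norm w \<le> r \<longrightarrow> norm (P k w) \<le> C * \<theta>^k" using PB[OF r01] by (auto simp: P_def)
    moreover obtain G where "\<forall>w. norm w \<le> r \<longrightarrow> norm (g w) \<le> G" using hol_bound[OF holg r01(2)] by metis
    ultimately show ?thesis by blast
  qed
  have summ: "summable (\<lambda>k. t k z)" if z: "z \<in> ball 0 1" for z
  proof -
    define r where "r = (norm z + 1) / 2"
    have z1: "norm z < 1" using z by simp
    have r1: "0 < r" using z1 unfolding r_def by (simp add: add_nonneg_pos)
    have r2: "r < 1" using z1 unfolding r_def by (simp add: field_simps)
    have r3: "norm z \<le> r" using z1 unfolding r_def by (simp add: field_simps)
    obtain C G where CG: "\<forall>k w. norm w \<le> r \<longrightarrow> norm (P k w) \<le> C * \<theta>^k" "\<forall>w. norm w \<le> r \<longrightarrow> norm (g w) \<le> G"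
      using loc[OF r1 r2] by blast
    show ?thesis
      by (rule summable_comparison_test'[OF Msum[of C G]]) (use tb[OF r1 r2 CG r3] in auto)
  qed
  define f where "f z = suminf (\<lambda>k. t k z)" for z
  show ?thesis
  proof (rule that[of f])
    show "f holomorphic_on ball 0 1"
      unfolding f_def
    proof (rule holomorphic_uniform_sequence[where f="\<lambda>n z. \<Sum>i<n. t i z"])
      show "open (ball (0::complex) 1)" by simp
      fix n
      have "(\<lambda>z. t i z) holomorphic_on ball 0 1" for i
      proof -
        have "(\<lambda>z. m (\<beta>^j * z)) holomorphic_on ball 0 1" for j
          using hol_rot[OF holm, of "\<beta>^j"] b1 by (simp add: norm_power)
        moreover have "(\<lambda>z. g (\<beta>^i * z)) holomorphic_on ball 0 1"
          using hol_rot[OF holg, of "\<beta>^i"] b1 by (simp add: norm_power)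
        ultimately show ?thesis unfolding t_def P_def
          by (intro holomorphic_intros) auto
      qed
      then show "(\<lambda>z. \<Sum>i<n. t i z) holomorphic_on ball 0 1"
        by (intro holomorphic_intros) auto
    next
      fix x :: complex assume x: "x \<in> ball 0 1"
      define d where "d = (1 - norm x) / 2"
      define r where "r = norm x + d"
      have x1: "norm x < 1" using x by simp
      have d0: "d > 0" using x1 by (simp add: d_def)
      have r1: "0 < r" using d0 by (simp add: r_def add_nonneg_pos)
      have r2: "r < 1" using x1 by (simp add: r_def d_def field_simps)
      have sub: "cball x d \<subseteq> cball 0 r"
      proof
        fix w assume "w \<in> cball x d"
        then have "norm (w - x) \<le> d" by (simp add: dist_norm norm_minus_commute)
        moreover have "norm w \<le> norm x + norm (w - x)" by (metis add.commute diff_add_cancel norm_triangle_ineq)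
        ultimately show "w \<in> cball 0 r" by (simp add: r_def)
      qed
      have sub2: "cball x d \<subseteq> ball 0 1" using sub r2 by (auto simp: subset_eq)
      obtain C G where CG: "\<forall>k w. norm w \<le> r \<longrightarrow> norm (P k w) \<le> C * \<theta>^k" "\<forall>w. norm w \<le> r \<longrightarrow> norm (g w) \<le> G"
        using loc[OF r1 r2] by blast
      have "uniform_limit (cball x d) (\<lambda>n z. \<Sum>i<n. t i z) (\<lambda>z. suminf (\<lambda>i. t i z)) sequentially"
        apply (rule Weierstrass_m_test[where M="M C G"])
        using tb[OF r1 r2 CG] sub Msum by auto
      then show "\<exists>d>0. cball x d \<subseteq> ball 0 1 \<and> uniform_limit (cball x d) (\<lambda>n z. \<Sum>i<n. t i z) (\<lambda>z. suminf (\<lambda>i. t i z)) sequentially"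
        using d0 sub2 by blast
    qed
  next
    show "\<forall>z\<in>ball 0 1. l * f z - m z * f (\<beta> * z) = g z"
    proof
      fix z :: complex assume z: "z \<in> ball 0 1"
      have bz: "\<beta> * z \<in> ball 0 1" using z b1 by (simp add: norm_mult)
      define s where "s k = P k z * g (\<beta>^k * z) / l^k" for k
      have ls: "l * t k z = s k" for k using l0 by (simp add: t_def s_def)
      have ms: "m z * t k (\<beta> * z) = s (Suc k)" for k
      proof -
        have e1: "P (Suc k) z = m z * P k (\<beta>*z)" unfolding P_def by (rule P_Suc)
        have e2: "\<beta>^k*(\<beta>*z) = \<beta>^Suc k * z" by (simp only: power_Suc2 mult.assoc)
        show ?thesis unfolding t_def s_def e1 e2 by simp
      qed
      have sums: "summable s" using summable_mult[OF summ[OF z], of l] ls by simp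
      have "l * f z = suminf s" unfolding f_def using suminf_mult[OF summ[OF z], of l] ls by simp
      moreover have "m z * f (\<beta> * z) = suminf (\<lambda>k. s (Suc k))"
        unfolding f_def using suminf_mult[OF summ[OF bz], of "m z"] ms by simp
      moreover have "suminf (\<lambda>k. s (Suc k)) = suminf s - s 0" by (rule suminf_split_head[OF sums])
      moreover have "s 0 = g z" by (simp add: s_def P_def)
      ultimately show "l * f z - m z * f (\<beta> * z) = g z" by simp
    qed
  next
    fix r C G and z :: complex
    assume r: "0 < r" "r < 1" and C: "\<forall>k w. norm w \<le> r \<longrightarrow> norm (\<Prod>j<k. m (\<beta>^j * w)) \<le> C * \<theta>^k"
      and G: "\<forall>w. norm w \<le> r \<longrightarrow> norm (g w) \<le> G" and z: "norm z \<le> r"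
    have "norm (f z) \<le> suminf (M C G)"
      unfolding f_def by (rule norm_suminf_le[OF _ Msum]) (use tb[OF r _ G z] C in \<open>auto simp: P_def\<close>)
    then show "norm (f z) \<le> C * G / (\<rho> - \<theta>)" using Mval by simp
  qed
qed

lemma zero_at_0:
  fixes \<phi> :: "complex \<Rightarrow> complex"
  assumes c: "continuous_on (ball 0 1) \<phi>" and z: "\<forall>z\<in>ball 0 1. z \<noteq> 0 \<longrightarrow> \<phi> z = 0"
  shows "\<phi> 0 = 0"
proof -
  have "isCont \<phi> 0" using continuous_on_interior[OF c] by simp
  then have t1: "(\<phi> \<longlongrightarrow> \<phi> 0) (at 0)" by (simp add: isCont_def)
  have "\<forall>\<^sub>F x in at 0. \<phi> x = 0"
    unfolding eventually_at using z by (intro exI[of _ 1]) (auto simp: dist_norm)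
  then have t2: "(\<phi> \<longlongrightarrow> 0) (at 0)" by (rule tendsto_eventually)
  show ?thesis using tendsto_unique[OF _ t1 t2] by simp
qed

lemma not_resolvent:
  fixes \<beta> :: complex and m :: "complex \<Rightarrow> complex"
    and T :: "(complex \<Rightarrow> complex) \<Rightarrow> (complex \<Rightarrow> complex)"
  assumes b1: "norm \<beta> = 1"
    and irr: "\<forall>n::nat. n \<ge> 1 \<longrightarrow> \<beta> ^ n \<noteq> 1"
    and holm: "m holomorphic_on ball 0 1"
    and nz: "\<forall>z\<in>ball 0 1. m z \<noteq> 0"
    and Tdef: "T = (\<lambda>f z. m z * f (\<beta> * z))"
  shows "\<beta> ^ n * m 0 \<notin> hol_resolvent_set T"
proof
  define l where "l = \<beta> ^ n * m 0"
  assume "\<beta> ^ n * m 0 \<in> hol_resolvent_set T"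
  then have "\<forall>g\<in>HolD. \<exists>f\<in>HolD. solves T l g f" by (simp add: hol_resolvent_set_def l_def)
  moreover have "(\<lambda>z. z^n) \<in> HolD" by (simp add: HolD_def holomorphic_intros)
  ultimately obtain f where f: "f holomorphic_on ball 0 1" "\<forall>z\<in>ball 0 1. l * f z - m z * f (\<beta> * z) = z^n"
    by (auto simp: HolD_def solves_def Tdef)
  have m0: "m 0 \<noteq> 0" using nz by simp
  have b0: "\<beta> \<noteq> 0" using b1 by auto
  have claim: "\<exists>h. h holomorphic_on ball 0 1 \<and> (\<forall>z\<in>ball 0 1. l * h z - \<beta>^k * m z * h (\<beta> * z) = z^(n-k))"
    if "k \<le> n" for k
    using that
  proof (induction k)
    case 0 then show ?case using f by auto
  next
    case (Suc k)
    then obtain h where h: "h holomorphic_on ball 0 1" "\<forall>z\<in>ball 0 1. l * h z - \<beta>^k * m z * h (\<beta> * z) = z^(n-k)"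
      by auto
    have kn: "k < n" using Suc.prems by simp
    have ne: "l - \<beta>^k * m 0 \<noteq> 0"
    proof
      assume "l - \<beta>^k * m 0 = 0"
      moreover have "\<beta>^n = \<beta>^k * \<beta>^(n-k)" using kn by (simp add: power_add[symmetric])
      ultimately have "\<beta>^k * (\<beta>^(n-k) - 1) * m 0 = 0"
        unfolding l_def by (simp add: algebra_simps)
      moreover have "\<beta>^(n-k) \<noteq> 1" using irr kn by auto
      ultimately show False using b0 m0 by simp
    qed
    have "(l - \<beta>^k * m 0) * h 0 = 0"
      using h(2)[rule_format, of 0] kn by (simp add: algebra_simps)
    then have h0: "h 0 = 0" using ne by simp
    define h' where "h' z = (if z = 0 then deriv h 0 else (h z - h 0) / (z - 0))" for z
    have holh': "h' holomorphic_on ball 0 1"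
      unfolding h'_def by (rule pole_lemma[OF h(1)]) simp
    have hz: "h z = z * h' z" for z using h0 by (simp add: h'_def)
    have holh'b: "(\<lambda>z. h' (\<beta> * z)) holomorphic_on ball 0 1" by (rule hol_rot[OF holh' b1])
    define \<phi> where "\<phi> z = l * h' z - \<beta>^Suc k * m z * h' (\<beta> * z) - z^(n - Suc k)" for z
    have hol\<phi>: "\<phi> holomorphic_on ball 0 1" unfolding \<phi>_def
      using holh' holh'b holm by (intro holomorphic_intros) auto
    have off: "\<forall>z\<in>ball 0 1. z \<noteq> 0 \<longrightarrow> \<phi> z = 0"
    proof (intro ballI impI)
      fix z :: complex assume z: "z \<in> ball 0 1" "z \<noteq> 0"
      have "z * (l * h' z - \<beta>^Suc k * m z * h' (\<beta> * z)) = l * h z - \<beta>^k * m z * h (\<beta> * z)"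
        by (simp add: hz algebra_simps)
      also have "\<dots> = z^(n-k)" using h(2) z by auto
      also have "\<dots> = z * z^(n - Suc k)" proof -
        have "n - k = Suc (n - Suc k)" using kn by simp
        then show ?thesis by simp
      qed
      finally show "\<phi> z = 0" using z(2) by (simp add: \<phi>_def)
    qed
    have "\<phi> 0 = 0"
      by (rule zero_at_0[OF holomorphic_on_imp_continuous_on[OF hol\<phi>] off])
    then have "\<forall>z\<in>ball 0 1. l * h' z - \<beta>^Suc k * m z * h' (\<beta> * z) = z^(n - Suc k)"
      using off by (auto simp: \<phi>_def)
    then show ?case using holh' by blast
  qed
  obtain h where hh: "\<forall>z\<in>ball 0 1. l * h z - \<beta>^n * m z * h (\<beta> * z) = z^(n-n)"
    using claim[of n] by auto
  have "l * h 0 - \<beta>^n * m 0 * h (\<beta> * 0) = 0^(n-n)" using hh[rule_format, of 0] by simp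
  then have "l * h 0 - \<beta>^n * m 0 * h 0 = 1" by simp
  then show False by (simp add: l_def)
qed

lemma cis_period: "cis (2 * pi * (x + of_int j)) = cis (2 * pi * x)"
proof -
  have "cis (2 * pi * (x + of_int j)) = cis (2 * pi * x) * cis (2 * pi * of_int j)"
    by (simp add: cis_mult algebra_simps)
  also have "cis (2 * pi * of_int j) = 1" by (intro cis_multiple_2pi) simp
  finally show ?thesis by simp
qed

lemma dense_orbit:
  fixes \<beta> w :: complex
  assumes b1: "norm \<beta> = 1" and irr: "\<forall>n::nat. n \<ge> 1 \<longrightarrow> \<beta> ^ n \<noteq> 1"
    and w1: "norm w = 1" and e: "e > 0"
  shows "\<exists>n. norm (\<beta>^n - w) < e"
proof -
  define F where "F x = cis (2 * pi * x)" for x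
  have b0: "\<beta> \<noteq> 0" "w \<noteq> 0" using b1 w1 by auto
  define a where "a = Arg \<beta> / (2 * pi)"
  have bF: "\<beta> = F a" using cis_Arg[OF b0(1)] b1 by (simp add: F_def a_def sgn_div_norm)
  define b where "b = frac (Arg w / (2 * pi))"
  have wF: "w = F b"
  proof -
    have "Arg w / (2 * pi) = b + of_int \<lfloor>Arg w / (2 * pi)\<rfloor>" by (simp add: b_def frac_def)
    then have "F (Arg w / (2 * pi)) = F b" unfolding F_def by (metis cis_period)
    moreover have "F (Arg w / (2 * pi)) = w" using cis_Arg[OF b0(2)] w1 by (simp add: F_def sgn_div_norm)
    ultimately show ?thesis by simp
  qed
  have b01: "0 \<le> b" "b \<le> 1" by (auto simp: b_def frac_lt_1 less_imp_le)
  have arat: "a \<notin> \<rat>"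
  proof
    assume "a \<in> \<rat>"
    then obtain p q where pq: "q > 0" "a = of_int p / of_int q" by (auto elim: Rats_cases')
    have "\<beta> ^ nat q = F (real (nat q) * a)" unfolding bF F_def Complex.DeMoivre by (simp add: mult_ac)
    also have "real (nat q) * a = of_int p" using pq by simp
    also have "F (of_int p) = 1" unfolding F_def by (intro cis_multiple_2pi) simp
    finally have "\<beta> ^ nat q = 1" .
    moreover have "nat q \<ge> 1" using pq by simp
    ultimately show False using irr by blast
  qed
  have "continuous_on UNIV F" unfolding F_def by (intro continuous_intros)
  then obtain d where d: "d > 0" "\<And>x. dist x b < d \<Longrightarrow> dist (F x) (F b) < e"
    using e unfolding continuous_on_iff by blast
  obtain k where k: "k > 0" "\<bar>frac (real k * a) - b\<bar> < d"
    using Kronecker_approx_1_explicit[OF arat b01 d(1)] by blast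
  have "\<beta>^k = F (real k * a)" unfolding bF F_def Complex.DeMoivre by (simp add: mult_ac)
  also have "real k * a = frac (real k * a) + of_int \<lfloor>real k * a\<rfloor>" by (simp add: frac_def)
  also have "F \<dots> = F (frac (real k * a))" unfolding F_def by (rule cis_period)
  finally have "\<beta>^k = F (frac (real k * a))" .
  moreover have "dist (F (frac (real k * a))) (F b) < e" using d(2) k(2) by (simp add: dist_real_def)
  ultimately have "norm (\<beta>^k - w) < e" using wF by (simp add: dist_norm)
  then show ?thesis by blast
qed

lemma W_from:
  fixes m :: "complex \<Rightarrow> complex" and T :: "(complex \<Rightarrow> complex) \<Rightarrow> (complex \<Rightarrow> complex)"
  assumes Tdef: "T = (\<lambda>f z. m z * f (\<beta> * z))" and d: "\<delta> > 0"
    and ex: "\<And>\<mu> g. \<mu> \<in> cball l \<delta> \<Longrightarrow> g holomorphic_on ball 0 1 \<Longrightarrow>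
              \<exists>f. f holomorphic_on ball 0 1 \<and> (\<forall>z\<in>ball 0 1. \<mu> * f z - m z * f (\<beta> * z) = g z)"
    and un: "\<And>\<mu> u. \<mu> \<in> cball l \<delta> \<Longrightarrow> u holomorphic_on ball 0 1 \<Longrightarrow>
              (\<forall>z\<in>ball 0 1. \<mu> * u z - m z * u (\<beta> * z) = 0) \<Longrightarrow> \<forall>z\<in>ball 0 1. u z = 0"
    and bd: "\<And>g r. g holomorphic_on ball 0 1 \<Longrightarrow> 0 < r \<Longrightarrow> r < 1 \<Longrightarrow>
              \<exists>C. \<forall>\<mu>\<in>cball l \<delta>. \<forall>f. f holomorphic_on ball 0 1 \<and> (\<forall>z\<in>ball 0 1. \<mu> * f z - m z * f (\<beta> * z) = g z)
                   \<longrightarrow> (\<forall>z. norm z \<le> r \<longrightarrow> norm (f z) \<le> C)"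
  shows "l \<in> waelbroeck_resolvent_set T"
proof -
  have res: "\<mu> \<in> hol_resolvent_set T" if mu: "\<mu> \<in> cball l \<delta>" for \<mu>
    unfolding hol_resolvent_set_def
  proof (intro CollectI conjI ballI impI)
    fix g assume "g \<in> HolD"
    then show "\<exists>f\<in>HolD. solves T \<mu> g f"
      using ex[OF mu] by (auto simp: HolD_def solves_def Tdef)
  next
    fix f1 f2 assume f: "f1 \<in> HolD" "f2 \<in> HolD"
      and eq: "\<forall>z\<in>ball 0 1. \<mu> * f1 z - T f1 z = \<mu> * f2 z - T f2 z"
    have "(\<lambda>z. f1 z - f2 z) holomorphic_on ball 0 1" using f by (auto simp: HolD_def intro!: holomorphic_intros)
    moreover have "\<forall>z\<in>ball 0 1. \<mu> * (f1 z - f2 z) - m z * (f1 (\<beta> * z) - f2 (\<beta> * z)) = 0"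
      using eq by (auto simp: Tdef algebra_simps)
    ultimately have "\<forall>z\<in>ball 0 1. f1 z - f2 z = 0" using un[OF mu] by blast
    then show "f1 z = f2 z" if "z \<in> ball 0 1" for z using that by simp
  qed
  have W: "\<forall>g\<in>HolD. \<forall>r. 0 < r \<and> r < 1 \<longrightarrow>
           (\<exists>C. \<forall>\<mu>\<in>cball l \<delta>. \<forall>f\<in>HolD. solves T \<mu> g f \<longrightarrow>
                 (\<forall>z. norm z \<le> r \<longrightarrow> norm (f z) \<le> C))"
  proof (intro ballI allI impI)
    fix g and r :: real assume g: "g \<in> HolD" and r: "0 < r \<and> r < 1"
    obtain C where C: "\<forall>\<mu>\<in>cball l \<delta>. \<forall>f. f holomorphic_on ball 0 1 \<and> (\<forall>z\<in>ball 0 1. \<mu> * f z - m z * f (\<beta> * z) = g z)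
                   \<longrightarrow> (\<forall>z. norm z \<le> r \<longrightarrow> norm (f z) \<le> C)"
      using bd[of g r] g r by (auto simp: HolD_def)
    show "\<exists>C. \<forall>\<mu>\<in>cball l \<delta>. \<forall>f\<in>HolD. solves T \<mu> g f \<longrightarrow> (\<forall>z. norm z \<le> r \<longrightarrow> norm (f z) \<le> C)"
      using C unfolding HolD_def solves_def Tdef by blast
  qed
  have "cball l \<delta> \<subseteq> hol_resolvent_set T" using res by blast
  moreover have "l \<in> hol_resolvent_set T" using res d by simp
  ultimately show ?thesis unfolding waelbroeck_resolvent_set_def using W d by blast
qed

lemma core_exist2:
  fixes m g :: "complex \<Rightarrow> complex" and \<beta> l :: complex
  assumes b1: "norm \<beta> = 1" and holm: "m holomorphic_on ball 0 1" and holg: "g holomorphic_on ball 0 1"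
    and th: "0 \<le> \<theta>" "\<theta> < \<rho>" "\<rho> \<le> norm l"
    and PB: "\<And>r. 0 < r \<Longrightarrow> r < 1 \<Longrightarrow> \<exists>C. \<forall>k z. norm z \<le> r \<longrightarrow> norm (\<Prod>j<k. m (\<beta>^j * z)) \<le> C * \<theta>^k"
  shows "\<exists>f. f holomorphic_on ball 0 1 \<and> (\<forall>z\<in>ball 0 1. l * f z - m z * f (\<beta> * z) = g z) \<and>
    (\<forall>r C G z. 0 < r \<longrightarrow> r < 1 \<longrightarrow> (\<forall>k w. norm w \<le> r \<longrightarrow> norm (\<Prod>j<k. m (\<beta>^j * w)) \<le> C * \<theta>^k)
       \<longrightarrow> (\<forall>w. norm w \<le> r \<longrightarrow> norm (g w) \<le> G) \<longrightarrow> norm z \<le> r \<longrightarrow> norm (f z) \<le> C * G / (\<rho> - \<theta>))"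
proof (rule core_exist[OF b1 holm holg th PB])
  fix f assume a: "f holomorphic_on ball 0 1" and b: "\<forall>z\<in>ball 0 1. l * f z - m z * f (\<beta> * z) = g z"
    and c: "\<And>r C G z. 0 < r \<Longrightarrow> r < 1 \<Longrightarrow> (\<forall>k w. norm w \<le> r \<longrightarrow> norm (\<Prod>j<k. m (\<beta>^j * w)) \<le> C * \<theta>^k)
       \<Longrightarrow> (\<forall>w. norm w \<le> r \<longrightarrow> norm (g w) \<le> G) \<Longrightarrow> norm z \<le> r \<Longrightarrow> norm (f z) \<le> C * G / (\<rho> - \<theta>)"
  have c': "\<forall>r C G z. 0 < r \<longrightarrow> r < 1 \<longrightarrow> (\<forall>k w. norm w \<le> r \<longrightarrow> norm (\<Prod>j<k. m (\<beta>^j * w)) \<le> C * \<theta>^k)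
       \<longrightarrow> (\<forall>w. norm w \<le> r \<longrightarrow> norm (g w) \<le> G) \<longrightarrow> norm z \<le> r \<longrightarrow> norm (f z) \<le> C * G / (\<rho> - \<theta>)"
  proof (intro allI impI)
    fix r C G :: real and z :: complex
    assume "0 < r" "r < 1" "\<forall>k w. norm w \<le> r \<longrightarrow> norm (\<Prod>j<k. m (\<beta>^j * w)) \<le> C * \<theta>^k"
      "\<forall>w. norm w \<le> r \<longrightarrow> norm (g w) \<le> G" "norm z \<le> r"
    then show "norm (f z) \<le> C * G / (\<rho> - \<theta>)" by (rule c)
  qed
  show ?thesis using a b c' by blast
qed

lemma big_case:
  fixes \<beta> :: complex and m :: "complex \<Rightarrow> complex"
    and T :: "(complex \<Rightarrow> complex) \<Rightarrow> (complex \<Rightarrow> complex)"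
  assumes b1: "norm \<beta> = 1"
    and irr: "\<forall>n::nat. n \<ge> 1 \<longrightarrow> \<beta> ^ n \<noteq> 1"
    and holm: "m holomorphic_on ball 0 1"
    and nz: "\<forall>z\<in>ball 0 1. m z \<noteq> 0"
    and Tdef: "T = (\<lambda>f z. m z * f (\<beta> * z))"
    and big: "norm l > norm (m 0)"
  shows "l \<in> waelbroeck_resolvent_set T"
proof -
  define n0 where "n0 = norm (m 0)"
  have n0: "n0 > 0" using nz by (simp add: n0_def)
  define \<theta> where "\<theta> = (n0 + norm l) / 2"
  define \<rho> where "\<rho> = (\<theta> + norm l) / 2"
  define \<delta> where "\<delta> = norm l - \<rho>"
  have nl: "n0 < norm l" using big by (simp add: n0_def)
  have th1: "0 \<le> \<theta>" using n0 by (simp add: \<theta>_def)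
  have th2: "\<theta> < \<rho>" using nl by (simp add: \<theta>_def \<rho>_def)
  have th3: "\<delta> > 0" using nl by (simp add: \<theta>_def \<rho>_def \<delta>_def)
  note th = th1 th2 th3
  have q: "\<theta> / n0 > 1" using nl n0 by (simp add: \<theta>_def field_simps)
  have PB: "\<exists>C. \<forall>k z. norm z \<le> r \<longrightarrow> norm (\<Prod>j<k. m (\<beta>^j * z)) \<le> C * \<theta>^k" if r: "0 < r" "r < 1" for r
  proof -
    obtain C where "C \<ge> 0" "\<And>k z. norm z \<le> r \<Longrightarrow> norm (\<Prod>j<k. m (\<beta>^j * z)) \<le> C * (\<theta> / n0 * norm (m 0))^k"
      using prod_bound[OF b1 irr holm nz q r] by blast
    moreover have "\<theta> / n0 * norm (m 0) = \<theta>" using n0 by (simp add: n0_def)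
    ultimately show ?thesis by auto
  qed
  have rho: "\<rho> \<le> norm \<mu>" if "\<mu> \<in> cball l \<delta>" for \<mu>
  proof -
    have "norm l \<le> norm \<mu> + norm (l - \<mu>)" by (rule norm_triangle_sub)
    moreover have "norm (l - \<mu>) \<le> \<delta>" using that by (simp add: dist_norm)
    ultimately show ?thesis by (simp add: \<delta>_def)
  qed
  show ?thesis
  proof (rule W_from[OF Tdef th(3)])
    fix \<mu> g assume mu: "\<mu> \<in> cball l \<delta>" and g: "g holomorphic_on ball 0 1"
    have "\<exists>F. F holomorphic_on ball 0 1 \<and> (\<forall>z\<in>ball 0 1. \<mu> * F z - m z * F (\<beta> * z) = g z)"
      using core_exist2[OF b1 holm g th(1,2) rho[OF mu] PB] by blast
    then show "\<exists>f. f holomorphic_on ball 0 1 \<and> (\<forall>z\<in>ball 0 1. \<mu> * f z - m z * f (\<beta> * z) = g z)" by blast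
  next
    fix \<mu> u assume mu: "\<mu> \<in> cball l \<delta>" and u: "u holomorphic_on ball 0 1"
      and eq: "\<forall>z\<in>ball 0 1. \<mu> * u z - m z * u (\<beta> * z) = 0"
    show "\<forall>z\<in>ball 0 1. u z = 0"
    proof
      fix z :: complex assume zb: "z \<in> ball 0 1"
      show "u z = 0" by (rule core_unique[OF b1 th(1,2) rho[OF mu] PB u eq]) (use zb in auto)
    qed
  next
    fix g and r :: real assume g: "g holomorphic_on ball 0 1" and r: "0 < r" "r < 1"
    obtain C where C: "\<forall>k z. norm z \<le> r \<longrightarrow> norm (\<Prod>j<k. m (\<beta>^j * z)) \<le> C * \<theta>^k" using PB[OF r] by blast
    obtain G where G: "G \<ge> 0" "\<And>w. norm w \<le> r \<Longrightarrow> norm (g w) \<le> G" using hol_bound[OF g r(2)] by blast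
    have "\<forall>\<mu>\<in>cball l \<delta>. \<forall>f. f holomorphic_on ball 0 1 \<and> (\<forall>z\<in>ball 0 1. \<mu> * f z - m z * f (\<beta> * z) = g z)
                   \<longrightarrow> (\<forall>z. norm z \<le> r \<longrightarrow> norm (f z) \<le> C * G / (\<rho> - \<theta>))"
    proof (intro ballI allI impI)
      fix \<mu> f and z :: complex assume mu: "\<mu> \<in> cball l \<delta>"
        and f: "f holomorphic_on ball 0 1 \<and> (\<forall>z\<in>ball 0 1. \<mu> * f z - m z * f (\<beta> * z) = g z)"
        and z: "norm z \<le> r"
      obtain F where F: "F holomorphic_on ball 0 1" "\<forall>z\<in>ball 0 1. \<mu> * F z - m z * F (\<beta> * z) = g z"
        "\<forall>r C G z. 0 < r \<longrightarrow> r < 1 \<longrightarrow> (\<forall>k w. norm w \<le> r \<longrightarrow> norm (\<Prod>j<k. m (\<beta>^j * w)) \<le> C * \<theta>^k)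
       \<longrightarrow> (\<forall>w. norm w \<le> r \<longrightarrow> norm (g w) \<le> G) \<longrightarrow> norm z \<le> r \<longrightarrow> norm (F z) \<le> C * G / (\<rho> - \<theta>)"
        using core_exist2[OF b1 holm g th(1,2) rho[OF mu] PB] by blast
      have hu: "(\<lambda>z. f z - F z) holomorphic_on ball 0 1" using f F(1) by (intro holomorphic_intros) auto
      have eu: "\<forall>z\<in>ball 0 1. \<mu> * (f z - F z) - m z * (f (\<beta> * z) - F (\<beta> * z)) = 0"
      proof
        fix z :: complex assume zz: "z \<in> ball 0 1"
        have "\<mu> * (f z - F z) - m z * (f (\<beta> * z) - F (\<beta> * z))
            = (\<mu> * f z - m z * f (\<beta> * z)) - (\<mu> * F z - m z * F (\<beta> * z))" by (simp add: algebra_simps)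
        also have "\<dots> = 0" using f F(2) zz by simp
        finally show "\<mu> * (f z - F z) - m z * (f (\<beta> * z) - F (\<beta> * z)) = 0" .
      qed
      have zb: "z \<in> ball 0 1" using z r by simp
      have "f z - F z = 0" by (rule core_unique[OF b1 th(1,2) rho[OF mu] PB hu eu]) (use zb in auto)
      then have "f z = F z" by simp
      moreover have "norm (F z) \<le> C * G / (\<rho> - \<theta>)" using F(3) r C G z by blast
      ultimately show "norm (f z) \<le> C * G / (\<rho> - \<theta>)" by simp
    qed
    then show "\<exists>C. \<forall>\<mu>\<in>cball l \<delta>. \<forall>f. f holomorphic_on ball 0 1 \<and> (\<forall>z\<in>ball 0 1. \<mu> * f z - m z * f (\<beta> * z) = g z)
                   \<longrightarrow> (\<forall>z. norm z \<le> r \<longrightarrow> norm (f z) \<le> C)" by blast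
  qed
qed

lemma transform:
  fixes \<beta> \<gamma> \<mu> :: complex and m f g :: "complex \<Rightarrow> complex"
  assumes b1: "norm \<beta> = 1" and gdef: "\<gamma> = inverse \<beta>" and nz: "\<forall>z\<in>ball 0 1. m z \<noteq> 0"
  shows "(\<forall>z\<in>ball 0 1. \<mu> * f z - m z * f (\<beta> * z) = g z) \<longleftrightarrow>
         (\<forall>w\<in>ball 0 1. 1 * f w - (\<mu> * inverse (m (\<gamma> * w))) * f (\<gamma> * w) = - g (\<gamma> * w) * inverse (m (\<gamma> * w)))"
proof -
  have b0: "\<beta> \<noteq> 0" using b1 by auto
  have g1: "norm \<gamma> = 1" using b1 by (simp add: gdef norm_inverse)
  have bg: "\<beta> * (\<gamma> * w) = w" "\<gamma> * (\<beta> * w) = w" for w using b0 by (simp_all add: gdef)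
  show ?thesis
  proof
    assume H: "\<forall>z\<in>ball 0 1. \<mu> * f z - m z * f (\<beta> * z) = g z"
    show "\<forall>w\<in>ball 0 1. 1 * f w - (\<mu> * inverse (m (\<gamma> * w))) * f (\<gamma> * w) = - g (\<gamma> * w) * inverse (m (\<gamma> * w))"
    proof
      fix w :: complex assume w: "w \<in> ball 0 1"
      have z: "\<gamma> * w \<in> ball 0 1" using w g1 by (simp add: norm_mult)
      have mz: "m (\<gamma> * w) \<noteq> 0" using nz z by blast
      have "\<mu> * f (\<gamma> * w) - m (\<gamma> * w) * f w = g (\<gamma> * w)" using H z bg(1)[of w] by metis
      then show "1 * f w - (\<mu> * inverse (m (\<gamma> * w))) * f (\<gamma> * w) = - g (\<gamma> * w) * inverse (m (\<gamma> * w))"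
        using mz by (simp add: field_simps)
    qed
  next
    assume H: "\<forall>w\<in>ball 0 1. 1 * f w - (\<mu> * inverse (m (\<gamma> * w))) * f (\<gamma> * w) = - g (\<gamma> * w) * inverse (m (\<gamma> * w))"
    show "\<forall>z\<in>ball 0 1. \<mu> * f z - m z * f (\<beta> * z) = g z"
    proof
      fix z :: complex assume z: "z \<in> ball 0 1"
      have w: "\<beta> * z \<in> ball 0 1" using z b1 by (simp add: norm_mult)
      have mz: "m z \<noteq> 0" using nz z by blast
      have "1 * f (\<beta> * z) - (\<mu> * inverse (m z)) * f z = - g z * inverse (m z)"
        using H w bg(2)[of z] by metis
      then have E: "m z * (1 * f (\<beta> * z) - (\<mu> * inverse (m z)) * f z) = m z * (- g z * inverse (m z))"
        by simp
      have mi: "m z * inverse (m z) = 1" using mz by simp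
      have "m z * (1 * f (\<beta> * z) - (\<mu> * inverse (m z)) * f z) = m z * f (\<beta> * z) - \<mu> * (m z * inverse (m z)) * f z"
        by (simp add: algebra_simps)
      moreover have "m z * (- g z * inverse (m z)) = - g z * (m z * inverse (m z))" by (simp add: algebra_simps)
      ultimately have "m z * f (\<beta> * z) - \<mu> * f z = - g z" using E mi by simp
      then show "\<mu> * f z - m z * f (\<beta> * z) = g z"
        by (simp add: algebra_simps)
    qed
  qed
qed

lemma small_case:
  fixes \<beta> :: complex and m :: "complex \<Rightarrow> complex"
    and T :: "(complex \<Rightarrow> complex) \<Rightarrow> (complex \<Rightarrow> complex)"
  assumes b1: "norm \<beta> = 1"
    and irr: "\<forall>n::nat. n \<ge> 1 \<longrightarrow> \<beta> ^ n \<noteq> 1"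
    and holm: "m holomorphic_on ball 0 1"
    and nz: "\<forall>z\<in>ball 0 1. m z \<noteq> 0"
    and Tdef: "T = (\<lambda>f z. m z * f (\<beta> * z))"
    and small: "norm l < norm (m 0)"
  shows "l \<in> waelbroeck_resolvent_set T"
proof -
  define \<gamma> where "\<gamma> = inverse \<beta>"
  have b0: "\<beta> \<noteq> 0" using b1 by auto
  have g1: "norm \<gamma> = 1" using b1 by (simp add: \<gamma>_def norm_inverse)
  have girr: "\<forall>n::nat. n \<ge> 1 \<longrightarrow> \<gamma> ^ n \<noteq> 1"
  proof (intro allI impI)
    fix n :: nat assume "n \<ge> 1"
    then have "\<beta>^n \<noteq> 1" using irr by blast
    then show "\<gamma>^n \<noteq> 1" by (simp add: \<gamma>_def power_inverse)
  qed
  define m2 where "m2 w = inverse (m (\<gamma> * w))" for w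
  have nz2: "\<forall>z\<in>ball 0 1. m2 z \<noteq> 0"
    using nz g1 by (auto simp: m2_def norm_mult)
  have holm2: "m2 holomorphic_on ball 0 1"
  proof -
    have "(\<lambda>w. m (\<gamma> * w)) holomorphic_on ball 0 1" by (rule hol_rot[OF holm g1])
    then show ?thesis unfolding m2_def
      using nz g1 by (intro holomorphic_intros) (auto simp: norm_mult)
  qed
  define n0 where "n0 = norm (m 0)"
  have n0: "n0 > 0" using nz by (simp add: n0_def)
  define \<delta> where "\<delta> = (n0 - norm l) / 3"
  have d0: "\<delta> > 0" using small by (simp add: \<delta>_def n0_def)
  define q where "q = n0 / (norm l + 2 * \<delta>)"
  have den: "norm l + 2 * \<delta> > 0" using d0 by (simp add: add_nonneg_pos)
  have q: "q > 1" using den small by (simp add: q_def \<delta>_def n0_def field_simps)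
  define \<theta> where "\<theta> = (norm l + \<delta>) / (norm l + 2 * \<delta>)"
  have th: "0 \<le> \<theta>" "\<theta> < 1" using den d0 by (auto simp: \<theta>_def)
  have mu_le: "norm \<mu> \<le> norm l + \<delta>" if "\<mu> \<in> cball l \<delta>" for \<mu>
  proof -
    have "norm \<mu> \<le> norm l + norm (\<mu> - l)" by (metis add.commute diff_add_cancel norm_triangle_ineq)
    moreover have "norm (\<mu> - l) \<le> \<delta>" using that by (simp add: dist_norm norm_minus_commute)
    ultimately show ?thesis by simp
  qed
  have m20: "norm (m2 0) = 1 / n0" by (simp add: m2_def n0_def norm_inverse divide_inverse)
  have PBu: "\<exists>C. \<forall>\<mu>\<in>cball l \<delta>. \<forall>k w. norm w \<le> r \<longrightarrow> norm (\<Prod>j<k. \<mu> * m2 (\<gamma>^j * w)) \<le> C * \<theta>^k"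
    if r: "0 < r" "r < 1" for r
  proof -
    obtain C where C: "C \<ge> 0" "\<And>k z. norm z \<le> r \<Longrightarrow> norm (\<Prod>j<k. m2 (\<gamma>^j * z)) \<le> C * (q * norm (m2 0))^k"
      using prod_bound[OF g1 girr holm2 nz2 q r] by blast
    have "norm (\<Prod>j<k. \<mu> * m2 (\<gamma>^j * w)) \<le> C * \<theta>^k"
      if mu: "\<mu> \<in> cball l \<delta>" and w: "norm w \<le> r" for \<mu> k w
    proof -
      have "norm (\<Prod>j<k. \<mu> * m2 (\<gamma>^j * w)) = norm \<mu> ^ k * norm (\<Prod>j<k. m2 (\<gamma>^j * w))"
        by (simp add: prod.distrib norm_mult norm_power)
      also have "\<dots> \<le> norm \<mu> ^ k * (C * (q / n0)^k)"
        using C(2)[OF w] m20 by (intro mult_left_mono) (auto simp: divide_inverse)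
      also have "\<dots> = C * (norm \<mu> * q / n0)^k" by (simp add: power_mult_distrib power_divide)
      also have "\<dots> \<le> C * \<theta>^k"
      proof (intro mult_left_mono power_mono C(1))
        show "0 \<le> norm \<mu> * q / n0" using q n0 by simp
        have "norm \<mu> * q / n0 = norm \<mu> / (norm l + 2 * \<delta>)" using n0 by (simp add: q_def)
        also have "\<dots> \<le> \<theta>" unfolding \<theta>_def using mu_le[OF mu] den by (intro divide_right_mono) auto
        finally show "norm \<mu> * q / n0 \<le> \<theta>" .
      qed
      finally show ?thesis .
    qed
    then show ?thesis by blast
  qed
  have PB: "\<exists>C. \<forall>k w. norm w \<le> r \<longrightarrow> norm (\<Prod>j<k. \<mu> * m2 (\<gamma>^j * w)) \<le> C * \<theta>^k"
    if "\<mu> \<in> cball l \<delta>" "0 < r" "r < 1" for \<mu> r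
    using PBu[OF that(2,3)] that(1) by blast
  have holmu: "(\<lambda>w. \<mu> * m2 w) holomorphic_on ball 0 1" for \<mu>
    using holm2 by (intro holomorphic_intros)
  define g2 where "g2 g w = - g (\<gamma> * w) * inverse (m (\<gamma> * w))" for g :: "complex \<Rightarrow> complex" and w
  have holg2: "g2 g holomorphic_on ball 0 1" if "g holomorphic_on ball 0 1" for g
  proof -
    have "(\<lambda>w. g (\<gamma> * w)) holomorphic_on ball 0 1" by (rule hol_rot[OF that g1])
    then show ?thesis using holm2 unfolding g2_def m2_def[symmetric] by (intro holomorphic_intros)
  qed
  have tr: "(\<forall>z\<in>ball 0 1. \<mu> * f z - m z * f (\<beta> * z) = g z) \<longleftrightarrow>
         (\<forall>w\<in>ball 0 1. 1 * f w - (\<mu> * m2 w) * f (\<gamma> * w) = g2 g w)" for \<mu> f g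
    unfolding m2_def g2_def by (rule transform[OF b1 \<gamma>_def nz])
  have one: "0 \<le> \<theta>" "\<theta> < 1" "1 \<le> norm (1::complex)" using th by auto
  show ?thesis
  proof (rule W_from[OF Tdef d0])
    fix \<mu> g assume mu: "\<mu> \<in> cball l \<delta>" and g: "g holomorphic_on ball 0 1"
    have "\<exists>F. F holomorphic_on ball 0 1 \<and> (\<forall>w\<in>ball 0 1. 1 * F w - (\<mu> * m2 w) * F (\<gamma> * w) = g2 g w)"
      using core_exist2[OF g1 holmu holg2[OF g] one PB[OF mu]] by blast
    then obtain F where "F holomorphic_on ball 0 1" "\<forall>w\<in>ball 0 1. 1 * F w - (\<mu> * m2 w) * F (\<gamma> * w) = g2 g w" by blast
    then show "\<exists>f. f holomorphic_on ball 0 1 \<and> (\<forall>z\<in>ball 0 1. \<mu> * f z - m z * f (\<beta> * z) = g z)"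
      using tr by blast
  next
    fix \<mu> u assume mu: "\<mu> \<in> cball l \<delta>" and u: "u holomorphic_on ball 0 1"
      and eq: "\<forall>z\<in>ball 0 1. \<mu> * u z - m z * u (\<beta> * z) = 0"
    have eq2: "\<forall>w\<in>ball 0 1. 1 * u w - (\<mu> * m2 w) * u (\<gamma> * w) = 0"
      using eq tr[of \<mu> u "\<lambda>_. 0"] by (simp add: g2_def)
    show "\<forall>z\<in>ball 0 1. u z = 0"
    proof
      fix z :: complex assume zb: "z \<in> ball 0 1"
      show "u z = 0" by (rule core_unique[OF g1 one PB[OF mu] u eq2]) (use zb in auto)
    qed
  next
    fix g and r :: real assume g: "g holomorphic_on ball 0 1" and r: "0 < r" "r < 1"
    obtain C where C: "\<forall>\<mu>\<in>cball l \<delta>. \<forall>k w. norm w \<le> r \<longrightarrow> norm (\<Prod>j<k. \<mu> * m2 (\<gamma>^j * w)) \<le> C * \<theta>^k"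
      using PBu[OF r] by blast
    obtain G where G: "G \<ge> 0" "\<And>w. norm w \<le> r \<Longrightarrow> norm (g2 g w) \<le> G" using hol_bound[OF holg2[OF g] r(2)] by blast
    have "\<forall>\<mu>\<in>cball l \<delta>. \<forall>f. f holomorphic_on ball 0 1 \<and> (\<forall>z\<in>ball 0 1. \<mu> * f z - m z * f (\<beta> * z) = g z)
                   \<longrightarrow> (\<forall>z. norm z \<le> r \<longrightarrow> norm (f z) \<le> C * G / (1 - \<theta>))"
    proof (intro ballI allI impI)
      fix \<mu> f and z :: complex assume mu: "\<mu> \<in> cball l \<delta>"
        and f: "f holomorphic_on ball 0 1 \<and> (\<forall>z\<in>ball 0 1. \<mu> * f z - m z * f (\<beta> * z) = g z)"
        and z: "norm z \<le> r"
      have f2: "\<forall>w\<in>ball 0 1. 1 * f w - (\<mu> * m2 w) * f (\<gamma> * w) = g2 g w" using f tr by blast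
      obtain F where F: "F holomorphic_on ball 0 1" "\<forall>w\<in>ball 0 1. 1 * F w - (\<mu> * m2 w) * F (\<gamma> * w) = g2 g w"
        "\<forall>r C G z. 0 < r \<longrightarrow> r < 1 \<longrightarrow> (\<forall>k w. norm w \<le> r \<longrightarrow> norm (\<Prod>j<k. \<mu> * m2 (\<gamma>^j * w)) \<le> C * \<theta>^k)
       \<longrightarrow> (\<forall>w. norm w \<le> r \<longrightarrow> norm (g2 g w) \<le> G) \<longrightarrow> norm z \<le> r \<longrightarrow> norm (F z) \<le> C * G / (1 - \<theta>)"
        using core_exist2[OF g1 holmu holg2[OF g] one PB[OF mu]] by blast
      have hu: "(\<lambda>z. f z - F z) holomorphic_on ball 0 1" using f F(1) by (intro holomorphic_intros) auto
      have eu: "\<forall>z\<in>ball 0 1. 1 * (f z - F z) - (\<mu> * m2 z) * (f (\<gamma> * z) - F (\<gamma> * z)) = 0"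
      proof
        fix z :: complex assume zz: "z \<in> ball 0 1"
        have "1 * (f z - F z) - (\<mu> * m2 z) * (f (\<gamma> * z) - F (\<gamma> * z))
            = (1 * f z - (\<mu> * m2 z) * f (\<gamma> * z)) - (1 * F z - (\<mu> * m2 z) * F (\<gamma> * z))" by (simp add: algebra_simps)
        also have "\<dots> = 0" using f2 F(2) zz by simp
        finally show "1 * (f z - F z) - (\<mu> * m2 z) * (f (\<gamma> * z) - F (\<gamma> * z)) = 0" .
      qed
      have zb: "z \<in> ball 0 1" using z r by simp
      have "f z - F z = 0" by (rule core_unique[OF g1 one PB[OF mu] hu eu]) (use zb in auto)
      then have "f z = F z" by simp
      moreover have "\<forall>k w. norm w \<le> r \<longrightarrow> norm (\<Prod>j<k. \<mu> * m2 (\<gamma>^j * w)) \<le> C * \<theta>^k" using C mu by blast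
      moreover have "norm (F z) \<le> C * G / (1 - \<theta>)" using F(3) r G z calculation(2) by blast
      ultimately show "norm (f z) \<le> C * G / (1 - \<theta>)" by simp
    qed
    then show "\<exists>C. \<forall>\<mu>\<in>cball l \<delta>. \<forall>f. f holomorphic_on ball 0 1 \<and> (\<forall>z\<in>ball 0 1. \<mu> * f z - m z * f (\<beta> * z) = g z)
                   \<longrightarrow> (\<forall>z. norm z \<le> r \<longrightarrow> norm (f z) \<le> C)" by blast
  qed
qed

theorem theorem7p3:
  fixes \<beta> :: complex and m :: "complex \<Rightarrow> complex"
    and T :: "(complex \<Rightarrow> complex) \<Rightarrow> (complex \<Rightarrow> complex)"
  assumes "norm \<beta> = 1"
    and "\<forall>n::nat. n \<ge> 1 \<longrightarrow> \<beta> ^ n \<noteq> 1"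
    and "m holomorphic_on ball 0 1"
    and "\<forall>z\<in>ball 0 1. m z \<noteq> 0"
    and "T = (\<lambda>f z. m z * f (\<beta> * z))"
  shows "{\<beta> ^ n * m 0 | n::nat. True} \<subseteq> hol_spectrum T
       \<and> hol_spectrum T \<subseteq> {l. norm l = norm (m 0)}
       \<and> waelbroeck_spectrum T = {l. norm l = norm (m 0)}"
proof -
  note A = assms
  have m0: "m 0 \<noteq> 0" using A(4) by simp
  have notres: "\<beta>^n * m 0 \<notin> hol_resolvent_set T" for n
    by (rule not_resolvent[OF A])
  have wres: "l \<in> waelbroeck_resolvent_set T" if "norm l \<noteq> norm (m 0)" for l
  proof (cases "norm l < norm (m 0)")
    case True then show ?thesis by (rule small_case[OF A])
  next
    case False
    then have "norm l > norm (m 0)" using that by simp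
    then show ?thesis by (rule big_case[OF A])
  qed
  have wsub: "waelbroeck_resolvent_set T \<subseteq> hol_resolvent_set T"
    by (auto simp: waelbroeck_resolvent_set_def)
  have P1: "{\<beta> ^ n * m 0 | n::nat. True} \<subseteq> hol_spectrum T"
    using notres by (auto simp: hol_spectrum_def)
  have P2: "hol_spectrum T \<subseteq> {l. norm l = norm (m 0)}"
    using wres wsub by (auto simp: hol_spectrum_def)
  have P3a: "waelbroeck_spectrum T \<subseteq> {l. norm l = norm (m 0)}"
    using wres by (auto simp: waelbroeck_spectrum_def)
  have P3b: "{l. norm l = norm (m 0)} \<subseteq> waelbroeck_spectrum T"
  proof
    fix l :: complex assume "l \<in> {l. norm l = norm (m 0)}"
    then have nl: "norm l = norm (m 0)" by simp
    show "l \<in> waelbroeck_spectrum T"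
      unfolding waelbroeck_spectrum_def
    proof
      assume "l \<in> waelbroeck_resolvent_set T"
      then obtain \<delta> where d: "\<delta> > 0" "cball l \<delta> \<subseteq> hol_resolvent_set T"
        by (auto simp: waelbroeck_spectrum_def waelbroeck_resolvent_set_def)
      define w where "w = l / m 0"
      have w1: "norm w = 1" using nl m0 by (simp add: w_def norm_divide)
      have e: "\<delta> / norm (m 0) > 0" using d m0 by simp
      obtain n where n: "norm (\<beta>^n - w) < \<delta> / norm (m 0)"
        using dense_orbit[OF A(1,2) w1 e] by blast
      have "norm (\<beta>^n * m 0 - l) = norm (m 0) * norm (\<beta>^n - w)"
      proof -
        have "\<beta>^n * m 0 - l = m 0 * (\<beta>^n - w)" using m0 by (simp add: w_def algebra_simps)
        then show ?thesis by (simp add: norm_mult)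
      qed
      also have "\<dots> < \<delta>" using n m0 by (simp add: field_simps)
      finally have "\<beta>^n * m 0 \<in> cball l \<delta>" by (simp add: dist_norm norm_minus_commute)
      then show False using d(2) notres by blast
    qed
  qed
  show ?thesis using P1 P2 P3a P3b by blast
qed

end
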